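(* Assume agents' preferences over sets of judgments are decisive. Then every judgment aggregation rule that satisfies participation also satisfies antipodal strategyproofness.
   Context: An agenda is a finite nonempty list $\Phi=(\phi_1,\dots,\phi_m)$ of propositional formulas; a judgment is $J\in\{0,1\}^m$, $J(\phi_k)$ its $k$-th entry; the antipodal judgment $\overline{J}$ accepts exactly the issues rejected by $J$. $\mathcal{J}(\Phi)\subseteq\{0,1\}^m$ is the nonempty set of admissible judgments. For a finite set of agents $N$, a profile is $\mathbf{P}=(J_1,\dots,J_n)\in\mathcal{J}(\Phi)^n$; $\mathbf{P}_{-i}$ is $\mathbf{P}$ with agent $i$'s judgment removed and $(\mathbf{P}_{-i},J)$ is $\mathbf{P}_{-i}$ with $J$ added as agent $i$'s judgment. A rule $F$ maps every profile (every finite group of agents, every agenda) to a nonempty $F(\mathbf{P})\subseteq\mathcal{J}(\Phi)$. Hamming distance $H(J,J')=\sum_k|J(\phi_k)-J'(\phi_k)|$. Agent $i$ with truthful judgment $J_i$ has $J\succ_i J'$ iff $H(J_i,J)<H(J_i,J')$. The preference over sets is decisive: for $X,Y\subseteq\mathcal{J}(\Phi)$, $X\mathrel{\mathring{\succ}}_i Y$ iff there exist $J\in X$, $J'\in Y$ with $J\succ_i J'$ and $\{J,J'\}\not\subseteq X\cap Y$. $F$ satisfies participation if there is no profile $\mathbf{P}$ and agent $i$ with $F(\mathbf{P}_{-i})\mathrel{\mathring{\succ}}_i F(\mathbf{P})$. $F$ satisfies antipodal strategyproofness if there is no profile $\mathbf{P}$ and agent $i$ with $F(\mathbf{P}_{-i},\overline{J_i})\mathrel{\mathring{\succ}}_i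 F(\mathbf{P})$. *)

theory Defs
  imports Main
begin

datatype form = Var nat | Neg form | Conj form form | Disj form form | Imp form form

text \<open>Agendas are nonempty lists of formulas; jdgs are 0/1 vectors, represented as
  bool lists of the same length as the agenda.\<close>
type_synonym agenda = "form list"
type_synonym jdg = "bool list"

definition well_formed_adm :: "(agenda \<Rightarrow> jdg set) \<Rightarrow> bool" where
  "well_formed_adm adm \<longleftrightarrow>
     (\<forall>\<Phi>. \<Phi> \<noteq> [] \<longrightarrow> adm \<Phi> \<noteq> {} \<and> (\<forall>J\<in>adm \<Phi>. length J = length \<Phi>))"

definition hamming :: "jdg \<Rightarrow> jdg \<Rightarrow> nat" where
  "hamming J J' = card {k. k < length J \<and> J ! k \<noteq> J' ! k}"

definition antipodal :: "jdg \<Rightarrow> jdg" where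
  "antipodal J = map Not J"

text \<open>A profile for agenda \<Phi>: a finite group of agents (the domain of the map, possibly
  empty) each with an admissible jdg. Removing agent i is P(i:=None); adding J as
  agent i's jdg is P(i \<mapsto> J).\<close>
definition is_profile :: "(agenda \<Rightarrow> jdg set) \<Rightarrow> agenda \<Rightarrow> ('ag \<rightharpoonup> jdg) \<Rightarrow> bool" where
  "is_profile adm \<Phi> P \<longleftrightarrow> finite (dom P) \<and> ran P \<subseteq> adm \<Phi>"

definition is_rule :: "(agenda \<Rightarrow> jdg set) \<Rightarrow> (agenda \<Rightarrow> ('ag \<rightharpoonup> jdg) \<Rightarrow> jdg set) \<Rightarrow> bool" where
  "is_rule adm F \<longleftrightarrow>
     (\<forall>\<Phi> P. \<Phi> \<noteq> [] \<longrightarrow> is_profile adm \<Phi> P \<longrightarrow> F \<Phi> P \<noteq> {} \<and> F \<Phi> P \<subseteq> adm \<Phi>)"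

definition dec_pref :: "jdg \<Rightarrow> jdg set \<Rightarrow> jdg set \<Rightarrow> bool" where
  "dec_pref Ji X Y \<longleftrightarrow>
     (\<exists>J\<in>X. \<exists>J'\<in>Y. hamming Ji J < hamming Ji J' \<and> \<not> ({J, J'} \<subseteq> X \<inter> Y))"

definition participation ::
  "(agenda \<Rightarrow> jdg set) \<Rightarrow> (agenda \<Rightarrow> ('ag \<rightharpoonup> jdg) \<Rightarrow> jdg set) \<Rightarrow> bool" where
  "participation adm F \<longleftrightarrow>
     (\<forall>\<Phi> P i Ji. \<Phi> \<noteq> [] \<longrightarrow> is_profile adm \<Phi> P \<longrightarrow> P i = Some Ji \<longrightarrow>
        \<not> dec_pref Ji (F \<Phi> (P(i := None))) (F \<Phi> P))"

text \<open>Antipodal strategyproofness; the deviation must itself yield a profile, i.e. the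
  antipodal jdg must be admissible.\<close>
definition antipodal_sp ::
  "(agenda \<Rightarrow> jdg set) \<Rightarrow> (agenda \<Rightarrow> ('ag \<rightharpoonup> jdg) \<Rightarrow> jdg set) \<Rightarrow> bool" where
  "antipodal_sp adm F \<longleftrightarrow>
     (\<forall>\<Phi> P i Ji. \<Phi> \<noteq> [] \<longrightarrow> is_profile adm \<Phi> P \<longrightarrow> P i = Some Ji \<longrightarrow>
        antipodal Ji \<in> adm \<Phi> \<longrightarrow>
        \<not> dec_pref Ji (F \<Phi> (P(i \<mapsto> antipodal Ji))) (F \<Phi> P))"

end

theory Submission
  imports Defs
begin

lemma hamming_anti:
  assumes "length J = length Ji"
  shows "hamming (antipodal Ji) J = length Ji - hamming Ji J"
proof -
  have A: "{k. k < length Ji \<and> map Not Ji ! k \<noteq> J ! k} = {..<length Ji} - {k. k < length Ji \<and> Ji ! k \<noteq> J ! k}"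
    by auto
  have "card ({..<length Ji} - {k. k < length Ji \<and> Ji ! k \<noteq> J ! k})
      = length Ji - card {k. k < length Ji \<and> Ji ! k \<noteq> J ! k}"
    by (subst card_Diff_subset) auto
  then show ?thesis unfolding hamming_def antipodal_def length_map A by simp
qed

lemma dec_trans:
  assumes "\<not> dec_pref Ji X Y" "\<not> dec_pref Ji Y Z" "Y \<noteq> {}"
  shows "\<not> dec_pref Ji X Z"
proof
  assume "dec_pref Ji X Z"
  then obtain J J' where J: "J \<in> X" "J' \<in> Z" "hamming Ji J < hamming Ji J'"
    "\<not> ({J, J'} \<subseteq> X \<inter> Z)" unfolding dec_pref_def by auto
  obtain K where K: "K \<in> Y" using assms(3) by blast
  have XY: "\<And>A B. A \<in> X \<Longrightarrow> B \<in> Y \<Longrightarrow> hamming Ji A < hamming Ji B \<Longrightarrow> A \<in> Y \<and> B \<in> X"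
  proof -
    fix A B assume h: "A \<in> X" "B \<in> Y" "hamming Ji A < hamming Ji B"
    have "{A, B} \<subseteq> X \<inter> Y"
    proof (rule ccontr)
      assume "\<not> {A, B} \<subseteq> X \<inter> Y"
      then have "dec_pref Ji X Y" unfolding dec_pref_def using h by blast
      then show False using assms(1) by simp
    qed
    then show "A \<in> Y \<and> B \<in> X" by simp
  qed
  have YZ: "\<And>A B. A \<in> Y \<Longrightarrow> B \<in> Z \<Longrightarrow> hamming Ji A < hamming Ji B \<Longrightarrow> A \<in> Z \<and> B \<in> Y"
  proof -
    fix A B assume h: "A \<in> Y" "B \<in> Z" "hamming Ji A < hamming Ji B"
    have "{A, B} \<subseteq> Y \<inter> Z"
    proof (rule ccontr)
      assume "\<not> {A, B} \<subseteq> Y \<inter> Z"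
      then have "dec_pref Ji Y Z" unfolding dec_pref_def using h by blast
      then show False using assms(2) by simp
    qed
    then show "A \<in> Z \<and> B \<in> Y" by simp
  qed
  show False
  proof (cases "hamming Ji K < hamming Ji J'")
    case True
    have "J' \<in> Y" using YZ[OF K J(2) True] by simp
    have "J \<in> Y" "J' \<in> X" using XY[OF J(1) \<open>J' \<in> Y\<close> J(3)] by simp_all
    have "J \<in> Z" using YZ[OF \<open>J \<in> Y\<close> J(2) J(3)] by simp
    then show False using J(1,2,4) \<open>J' \<in> X\<close> by simp
  next
    case False
    then have lt: "hamming Ji J < hamming Ji K" using J(3) by simp
    have "J \<in> Y" using XY[OF J(1) K lt] by simp
    have "J \<in> Z" "J' \<in> Y" using YZ[OF \<open>J \<in> Y\<close> J(2) J(3)] by simp_all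
    have "J' \<in> X" using XY[OF J(1) \<open>J' \<in> Y\<close> J(3)] by simp
    then show False using J(1,2,4) \<open>J \<in> Z\<close> by simp
  qed
qed

lemma card_bound: "card {k. k < (n::nat) \<and> Q k} \<le> n"
proof -
  have "card {k. k < n \<and> Q k} \<le> card {..<n}" by (rule card_mono) auto
  then show ?thesis by simp
qed

theorem theorem1:
  fixes adm :: "agenda \<Rightarrow> jdg set"
    and F :: "agenda \<Rightarrow> ('ag \<rightharpoonup> jdg) \<Rightarrow> jdg set"
  assumes "well_formed_adm adm"
    and "is_rule adm F"
    and "participation adm F"
  shows "antipodal_sp adm F"
  unfolding antipodal_sp_def
proof (intro allI impI)
  fix \<Phi> and P :: "'ag \<rightharpoonup> jdg" and i Ji
  assume ne: "\<Phi> \<noteq> []" and pr: "is_profile adm \<Phi> P" and Pi: "P i = Some Ji"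
    and aa: "antipodal Ji \<in> adm \<Phi>"
  let ?P' = "P(i \<mapsto> antipodal Ji)"
  have pr': "is_profile adm \<Phi> ?P'"
    using pr aa unfolding is_profile_def
    by (auto simp: ran_def)
  have prm: "is_profile adm \<Phi> (P(i := None))"
    using pr unfolding is_profile_def by (auto simp: ran_def)
  have eq: "?P'(i := None) = P(i := None)" by simp
  have Jadm: "Ji \<in> adm \<Phi>" using pr Pi unfolding is_profile_def by (auto simp: ran_def)
  have len: "\<And>J. J \<in> adm \<Phi> \<Longrightarrow> length J = length \<Phi>"
    using assms(1) ne unfolding well_formed_adm_def by blast
  have sub: "\<And>Q. is_profile adm \<Phi> Q \<Longrightarrow> F \<Phi> Q \<subseteq> adm \<Phi> \<and> F \<Phi> Q \<noteq> {}"
    using assms(2) ne unfolding is_rule_def by blast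
  have n1: "\<not> dec_pref Ji (F \<Phi> (P(i := None))) (F \<Phi> P)"
    using assms(3) ne pr Pi unfolding participation_def by blast
  have n2: "\<not> dec_pref (antipodal Ji) (F \<Phi> (P(i := None))) (F \<Phi> ?P')"
  proof -
    have "?P' i = Some (antipodal Ji)" by simp
    then have "\<not> dec_pref (antipodal Ji) (F \<Phi> (?P'(i := None))) (F \<Phi> ?P')"
      using assms(3) ne pr' unfolding participation_def by blast
    then show ?thesis using eq by simp
  qed
  have n2': "\<not> dec_pref Ji (F \<Phi> ?P') (F \<Phi> (P(i := None)))"
  proof
    assume "dec_pref Ji (F \<Phi> ?P') (F \<Phi> (P(i := None)))"
    then obtain J J' where J: "J \<in> F \<Phi> ?P'" "J' \<in> F \<Phi> (P(i := None))"
      "hamming Ji J < hamming Ji J'" "\<not> ({J, J'} \<subseteq> F \<Phi> ?P' \<inter> F \<Phi> (P(i := None)))"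
      unfolding dec_pref_def by blast
    have lJ: "length J = length Ji" "length J' = length Ji"
    proof -
      have "J \<in> adm \<Phi>" "J' \<in> adm \<Phi>" using J(1,2) sub[OF pr'] sub[OF prm] by auto
      then show "length J = length Ji" "length J' = length Ji" using len[OF Jadm] len by auto
    qed
    have hJ: "hamming Ji J \<le> length Ji" "hamming Ji J' \<le> length Ji"
      unfolding hamming_def by (rule card_bound)+
    have "hamming (antipodal Ji) J' < hamming (antipodal Ji) J"
      using hamming_anti[OF lJ(1)] hamming_anti[OF lJ(2)] J(3) hJ by simp
    then have "dec_pref (antipodal Ji) (F \<Phi> (P(i := None))) (F \<Phi> ?P')"
      unfolding dec_pref_def
    proof (intro bexI conjI)
      show "\<not> {J', J} \<subseteq> F \<Phi> (P(i := None)) \<inter> F \<Phi> ?P'" using J(4) by auto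
    qed (use J in auto)
    then show False using n2 by blast
  qed
  show "\<not> dec_pref Ji (F \<Phi> ?P') (F \<Phi> P)"
  proof (rule dec_trans[OF n2' n1])
    show "F \<Phi> (P(i := None)) \<noteq> {}" using sub[OF prm] by simp
  qed
qed

end
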